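(* Let $n=1$, let $U\subset\mathbb{R}$ be a connected open subset, and let $k$ be a positive integer with binary expansion $k=2^{\mu_r}+2^{\mu_{r-1}}+\cdots+2^{\mu_1}$, $\mu_r>\mu_{r-1}>\cdots>\mu_1\ge0$ integers; set $\mu=\mu_r$ (so $\mu+1$ is the number of binary digits of $k$ and $r$ is the number of digits equal to $1$). Then the Nash function $x\mapsto x^k$ on $U$ satisfies $\mathrm{LC}(x^k)\le \mu+r-1$.
   Context: For an open $U\subset\mathbb{R}^n$ with coordinates $x_1,\dots,x_n$, $\mathcal E(U)$ is the $\mathbb{R}$-algebra of $C^\infty$ functions on $U$, and $\mathcal N(U)$ the set of Nash functions on $U$ (real analytic $f$ on $U$ such that $P(x,f(x))=0$ on $U$ for some non-zero polynomial $P(x,y)$). Let $\mathfrak F$ be the free $\mathcal E(U)$-module on symbols $\mathbf d h$ ($h\in\mathcal E(U)$) and $\mathfrak R\subset\mathfrak F$ the submodule generated by the "linearity generators" $\mathbf d(h+k)-\mathbf d h-\mathbf d k$, $\mathbf d(\lambda\ell)-\lambda\mathbf d\ell$ ($\lambda\in\mathbb{R}$) and the "Leibniz generators" $\mathbf d(pq)-p\,\mathbf d q-q\,\mathbf d p$ ($h,k,\ell,p,q\in\mathcal E(U)$). For $f\in\mathcal N(U)$, the Leibniz complexity $\mathrm{LC}(f)$ is the minimum, over all $g\in\mathcal N(U)$ not identically zero and all ways of writing $g\big(\mathbf d f-\sum_{i=1}^n\frac{\partial f}{\partial x_i}\mathbf d x_i\big)\in\mathfrak F$ as an $\mathcal E(U)$-linear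 combination of generators of $\mathfrak R$, of the number of Leibniz generators used, where the generator $\mathbf d(1\cdot1)-1\,\mathbf d(1)-1\,\mathbf d(1)$ is not counted (so $\mathbf d c=0$ for constants $c\in\mathbb{R}$ may be used freely) and linearity generators are not counted. *)

theory Defs
  imports "HOL-Analysis.Analysis" "HOL-Computational_Algebra.Polynomial"
begin

text \<open>Functions on an open set U of the real line are represented by total functions
  real \<Rightarrow> real; only their values on U matter.\<close>

definition smooth_on :: "real set \<Rightarrow> (real \<Rightarrow> real) \<Rightarrow> bool" where
  "smooth_on U f \<longleftrightarrow> (\<forall>n. \<forall>x\<in>U. ((deriv ^^ n) f) differentiable (at x))"

definition real_analytic_on :: "real set \<Rightarrow> (real \<Rightarrow> real) \<Rightarrow> bool" where
  "real_analytic_on U f \<longleftrightarrow>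
     (\<forall>x0\<in>U. \<exists>\<rho>>0. \<exists>a::nat \<Rightarrow> real.
        \<forall>x. \<bar>x - x0\<bar> < \<rho> \<longrightarrow> (\<lambda>n. a n * (x - x0) ^ n) sums f x)"

text \<open>Bivariate real polynomials P(x,y) are represented as polynomials in y whose
  coefficients are polynomials in x.\<close>
definition eval2 :: "real poly poly \<Rightarrow> real \<Rightarrow> real \<Rightarrow> real" where
  "eval2 P x y = poly (map_poly (\<lambda>c. poly c x) P) y"

definition nash_on :: "real set \<Rightarrow> (real \<Rightarrow> real) \<Rightarrow> bool" where
  "nash_on U f \<longleftrightarrow> real_analytic_on U f \<and>
     (\<exists>P. P \<noteq> 0 \<and> (\<forall>x\<in>U. eval2 P x (f x) = 0))"

text \<open>Elements of the free E(U)-module on symbols d h: finite formal sums, given as lists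
  of pairs (coefficient, symbol).  Two symbols are the same iff the functions agree on U.\<close>
type_synonym fmod = "((real \<Rightarrow> real) \<times> (real \<Rightarrow> real)) list"

definition fm_coeff :: "real set \<Rightarrow> fmod \<Rightarrow> (real \<Rightarrow> real) \<Rightarrow> real \<Rightarrow> real" where
  "fm_coeff U xs h t = sum_list (map (\<lambda>(c, s). if (\<forall>u\<in>U. s u = h u) then c t else 0) xs)"

definition fm_eq :: "real set \<Rightarrow> fmod \<Rightarrow> fmod \<Rightarrow> bool" where
  "fm_eq U xs ys \<longleftrightarrow> (\<forall>h. \<forall>t\<in>U. fm_coeff U xs h t = fm_coeff U ys h t)"

datatype gen =
    LinAdd "real \<Rightarrow> real" "real \<Rightarrow> real"
  | LinScal real "real \<Rightarrow> real"
  | Leib "real \<Rightarrow> real" "real \<Rightarrow> real"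

fun gen_elem :: "gen \<Rightarrow> fmod" where
  "gen_elem (LinAdd h k) =
     [(\<lambda>_. 1, \<lambda>t. h t + k t), (\<lambda>_. -1, h), (\<lambda>_. -1, k)]"
| "gen_elem (LinScal lam l) =
     [(\<lambda>_. 1, \<lambda>t. lam * l t), (\<lambda>_. - lam, l)]"
| "gen_elem (Leib p q) =
     [(\<lambda>_. 1, \<lambda>t. p t * q t), (\<lambda>t. - p t, q), (\<lambda>t. - q t, p)]"

fun gen_args_smooth :: "real set \<Rightarrow> gen \<Rightarrow> bool" where
  "gen_args_smooth U (LinAdd h k) \<longleftrightarrow> smooth_on U h \<and> smooth_on U k"
| "gen_args_smooth U (LinScal lam l) \<longleftrightarrow> smooth_on U l"
| "gen_args_smooth U (Leib p q) \<longleftrightarrow> smooth_on U p \<and> smooth_on U q"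

fun counted_leib :: "real set \<Rightarrow> gen \<Rightarrow> bool" where
  "counted_leib U (Leib p q) \<longleftrightarrow> \<not> (\<forall>t\<in>U. p t = 1 \<and> q t = 1)"
| "counted_leib U _ \<longleftrightarrow> False"

definition comb_valid :: "real set \<Rightarrow> ((real \<Rightarrow> real) \<times> gen) list \<Rightarrow> bool" where
  "comb_valid U cs \<longleftrightarrow> (\<forall>(a, G)\<in>set cs. smooth_on U a \<and> gen_args_smooth U G)"

definition comb_val :: "((real \<Rightarrow> real) \<times> gen) list \<Rightarrow> fmod" where
  "comb_val cs = concat (map (\<lambda>(a, G). map (\<lambda>(c, s). (\<lambda>t. a t * c t, s)) (gen_elem G)) cs)"

definition leib_count :: "real set \<Rightarrow> ((real \<Rightarrow> real) \<times> gen) list \<Rightarrow> nat" where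
  "leib_count U cs = length (filter (\<lambda>(a, G). counted_leib U G) cs)"

text \<open>Leibniz complexity of f on U (n = 1): g (df - f' dx) with g Nash, not identically zero.\<close>
definition LC :: "real set \<Rightarrow> (real \<Rightarrow> real) \<Rightarrow> nat" where
  "LC U f = (LEAST m. \<exists>g cs. nash_on U g \<and> (\<exists>t\<in>U. g t \<noteq> 0) \<and> comb_valid U cs \<and>
      fm_eq U (comb_val cs) [(g, f), (\<lambda>t. - (g t * deriv f t), \<lambda>t. t)] \<and>
      leib_count U cs = m)"

end

theory Submission imports Defs begin

lemma deriv_poly_fun: "deriv (poly p) = poly (pderiv p)"
  by (rule ext, rule DERIV_imp_deriv, rule poly_DERIV)

lemma iter_deriv_poly: "(deriv ^^ n) (poly p) = poly ((pderiv ^^ n) p)"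
  by (induction n) (simp_all add: deriv_poly_fun)

lemma smooth_poly: "smooth_on U (poly p)"
  unfolding smooth_on_def iter_deriv_poly by simp

definition good :: "((real \<Rightarrow> real) \<times> gen) list \<Rightarrow> bool" where
  "good cs \<longleftrightarrow> (\<forall>(a, G)\<in>set cs. (\<exists>q. a = poly q) \<and> (\<exists>p q. G = Leib (poly p) (poly q)))"

lemma good_valid: "good cs \<Longrightarrow> comb_valid U cs"
  unfolding good_def comb_valid_def by (auto simp: smooth_poly)

definition scale :: "(real \<Rightarrow> real) \<Rightarrow> ((real \<Rightarrow> real) \<times> gen) list \<Rightarrow> ((real \<Rightarrow> real) \<times> gen) list" where
  "scale a cs = map (\<lambda>(b, G). (\<lambda>t. a t * b t, G)) cs"

lemma fm_coeff_append: "fm_coeff U (xs @ ys) h t = fm_coeff U xs h t + fm_coeff U ys h t"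
  by (simp add: fm_coeff_def)

lemma fm_coeff_map: "fm_coeff U (map (\<lambda>(c, s). (\<lambda>t. f t * c t, s)) xs) h t = f t * fm_coeff U xs h t"
  by (induction xs) (auto simp: fm_coeff_def algebra_simps)

lemma comb_val_append: "comb_val (xs @ ys) = comb_val xs @ comb_val ys"
  by (simp add: comb_val_def)

lemma comb_val_scale: "comb_val (scale a cs) = map (\<lambda>(c, s). (\<lambda>t. a t * c t, s)) (comb_val cs)"
  by (induction cs) (auto simp: comb_val_def scale_def mult.assoc)

lemma leib_count_append: "leib_count U (xs @ ys) = leib_count U xs + leib_count U ys"
  by (simp add: leib_count_def)

lemma leib_count_scale: "leib_count U (scale a cs) = leib_count U cs"
  by (induction cs) (auto simp: leib_count_def scale_def)

lemma leib_count_single: "leib_count U [(a, G)] \<le> 1"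
  by (simp add: leib_count_def)

lemma good_append: "good xs \<Longrightarrow> good ys \<Longrightarrow> good (xs @ ys)"
  by (auto simp: good_def)

lemma good_scale: "good cs \<Longrightarrow> good (scale (poly q) cs)"
  unfolding good_def scale_def by (fastforce simp flip: poly_mult)

definition T :: "real poly \<Rightarrow> fmod" where
  "T p = [(\<lambda>_. 1, poly p), (\<lambda>t. - poly (pderiv p) t, \<lambda>t. t)]"

definition ach :: "real set \<Rightarrow> nat \<Rightarrow> real poly \<Rightarrow> bool" where
  "ach U m p \<longleftrightarrow> (\<exists>cs. good cs \<and> leib_count U cs \<le> m \<and>
      (\<forall>h. \<forall>t\<in>U. fm_coeff U (comb_val cs) h t = fm_coeff U (T p) h t))"

lemma ach_x: "ach U 0 [:0, 1:]"
  unfolding ach_def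
  by (rule exI[of _ "[]"]) (auto simp: good_def leib_count_def comb_val_def fm_coeff_def T_def pderiv_pCons)

lemma ach_sq:
  assumes "ach U m p" shows "ach U (Suc m) (p * p)"
proof -
  obtain cs where cs: "good cs" "leib_count U cs \<le> m"
    "\<And>h t. t \<in> U \<Longrightarrow> fm_coeff U (comb_val cs) h t = fm_coeff U (T p) h t"
    using assms unfolding ach_def by blast
  define cs' where "cs' = [(poly 1, Leib (poly p) (poly p))] @ scale (poly (smult 2 p)) cs"
  have "good cs'" unfolding cs'_def
    by (rule good_append[OF _ good_scale[OF cs(1)]]) (auto simp: good_def)
  moreover have "leib_count U cs' \<le> Suc m"
    unfolding cs'_def leib_count_append leib_count_scale using cs(2) leib_count_single[of U] 
    by (metis add_le_mono plus_1_eq_Suc)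
  moreover have "fm_coeff U (comb_val cs') h t = fm_coeff U (T (p * p)) h t" if "t \<in> U" for h t
    unfolding cs'_def comb_val_append fm_coeff_append comb_val_scale fm_coeff_map cs(3)[OF that]
    by (simp add: comb_val_def fm_coeff_def T_def pderiv_mult algebra_simps)
  ultimately show ?thesis unfolding ach_def by blast
qed

lemma ach_x_mult:
  assumes "ach U m p" shows "ach U (Suc m) (p * [:0, 1:])"
proof -
  obtain cs where cs: "good cs" "leib_count U cs \<le> m"
    "\<And>h t. t \<in> U \<Longrightarrow> fm_coeff U (comb_val cs) h t = fm_coeff U (T p) h t"
    using assms unfolding ach_def by blast
  define cs' where "cs' = [(poly 1, Leib (poly p) (poly [:0, 1:]))] @ scale (poly [:0, 1:]) cs"
  have "good cs'" unfolding cs'_def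
    by (rule good_append[OF _ good_scale[OF cs(1)]]) (auto simp: good_def)
  moreover have "leib_count U cs' \<le> Suc m"
    unfolding cs'_def leib_count_append leib_count_scale using cs(2) leib_count_single[of U] 
    by (metis add_le_mono plus_1_eq_Suc)
  moreover have "fm_coeff U (comb_val cs') h t = fm_coeff U (T (p * [:0, 1:])) h t" if "t \<in> U" for h t
    unfolding cs'_def comb_val_append fm_coeff_append comb_val_scale fm_coeff_map cs(3)[OF that]
    by (simp add: comb_val_def fm_coeff_def T_def pderiv_mult pderiv_pCons algebra_simps) blast
  ultimately show ?thesis unfolding ach_def by blast
qed

lemma ach_mono: "ach U m p \<Longrightarrow> m \<le> m' \<Longrightarrow> ach U m' p"
  unfolding ach_def by (meson le_trans)

lemma x_monom: "[:0, 1:] = (monom 1 1 :: real poly)"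
  by (simp add: monom_altdef)

lemma sum_half:
  assumes "\<forall>i\<in>set ns. 0 < i"
  shows "(\<Sum>i\<leftarrow>ns. 2 ^ i :: nat) = 2 * (\<Sum>i\<leftarrow>map (\<lambda>i. i - 1) ns. 2 ^ i)"
  using assms
proof (induction ns)
  case (Cons a ns)
  then obtain b where "a = Suc b" by (meson gr0_implies_Suc list.set_intros(1))
  with Cons show ?case by simp
qed simp

lemma ach_pow:
  "ns \<noteq> [] \<Longrightarrow> sorted_wrt (<) ns \<Longrightarrow> k = (\<Sum>i\<leftarrow>ns. 2 ^ i) \<Longrightarrow>
    ach U (last ns + length ns - 1) (monom 1 k)"
proof (induction k arbitrary: ns rule: less_induct)
  case (less k ns)
  obtain n0 ns' where ns: "ns = n0 # ns'" using less.prems(1) by (cases ns) simp_all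
  show ?case
  proof (cases "n0 = 0")
    case True
    show ?thesis
    proof (cases "ns' = []")
      case True
      with ns \<open>n0 = 0\<close> less.prems have "k = 1" by simp
      with True ns \<open>n0 = 0\<close> show ?thesis using ach_x x_monom by simp
    next
      case False
      have k': "k = (\<Sum>i\<leftarrow>ns'. 2 ^ i) + 1" using less.prems ns True by simp
      have "ach U (last ns' + length ns' - 1) (monom 1 (\<Sum>i\<leftarrow>ns'. 2 ^ i))"
      proof (rule less.IH[OF _ False _ refl])
        show "(\<Sum>i\<leftarrow>ns'. 2 ^ i) < k" using k' by linarith
        show "sorted_wrt (<) ns'" using less.prems(2) ns by simp
      qed
      from ach_x_mult[OF this] have
        "ach U (Suc (last ns' + length ns' - 1)) (monom 1 k)"
        unfolding k' x_monom mult_monom by simp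
      moreover have "last ns = last ns'" "length ns = Suc (length ns')" "length ns' > 0"
        using ns False by auto
      ultimately show ?thesis by simp
    qed
  next
    case False
    have pos: "\<forall>i\<in>set ns. 0 < i" using less.prems(2) ns False by auto
    define ms where "ms = map (\<lambda>i. i - 1) ns"
    have k2: "k = 2 * (\<Sum>i\<leftarrow>ms. 2 ^ i)" using sum_half[OF pos] less.prems(3) ms_def by simp
    have "sorted_wrt (<) ms" unfolding ms_def sorted_wrt_map
      by (rule sorted_wrt_mono_rel[OF _ less.prems(2)]) (use pos in auto)
    moreover have "ms \<noteq> []" using ms_def ns by simp
    moreover have "0 < k" using less.prems(3) ns by simp
    ultimately have "ach U (last ms + length ms - 1) (monom 1 (\<Sum>i\<leftarrow>ms. 2 ^ i))"
      by (intro less.IH[OF _ _ _ refl]) (use k2 in linarith)+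
    from ach_sq[OF this] have "ach U (Suc (last ms + length ms - 1)) (monom 1 k)"
      unfolding k2 mult_monom by (simp add: mult_2)
    moreover have "last ms = last ns - 1" "length ms = length ns" "0 < last ns"
      using ms_def ns pos by (auto simp: last_map)
    moreover have "length ms > 0" using \<open>ms \<noteq> []\<close> by simp
    ultimately have "Suc (last ms + length ms - 1) = last ns + length ns - 1" by linarith
    with \<open>ach U (Suc (last ms + length ms - 1)) (monom 1 k)\<close> show ?thesis by simp
  qed
qed


lemma nash_one: "nash_on U (\<lambda>_. 1)"
proof -
  have eq: "(\<lambda>n. (if n = 0 then 1 else 0) * (x - x0) ^ n) = (\<lambda>r. if r = 0 then (\<lambda>_. 1::real) r else 0)" for x x0 :: real
    by auto
  have "\<forall>x. \<bar>x - x0\<bar> < 1 \<longrightarrow> (\<lambda>n. (if n = 0 then 1 else 0) * (x - x0) ^ n) sums 1" for x0 :: real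
    unfolding eq using sums_single[of 0 "\<lambda>_. 1::real"] by simp
  then have "real_analytic_on U (\<lambda>_. 1)"
    unfolding real_analytic_on_def by (metis zero_less_one)
  moreover have "eval2 [:[:-1:], 1:] x 1 = 0" for x
    by (simp add: eval2_def map_poly_pCons)
  ultimately show ?thesis unfolding nash_on_def
    by (intro conjI exI[of _ "[:[:-1:], 1:]"]) auto
qed

theorem lemma3p4:
  fixes U :: "real set" and k :: nat and mus :: "nat list"
  assumes "open U" and "connected U" and "U \<noteq> {}"
    and "0 < k"
    and "mus \<noteq> []" and "sorted_wrt (>) mus"
    and "k = (\<Sum>i\<leftarrow>mus. 2 ^ i)"
  shows "LC U (\<lambda>x. x ^ k) \<le> hd mus + length mus - 1"
proof -
  have "ach U (last (rev mus) + length (rev mus) - 1) (monom 1 k)"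
  proof (rule ach_pow)
    show "rev mus \<noteq> []" using assms(5) by simp
    show "sorted_wrt (<) (rev mus)" using assms(6) by (simp add: sorted_wrt_rev)
    show "k = (\<Sum>i\<leftarrow>rev mus. 2 ^ i)" using assms(7) by (simp flip: rev_map)
  qed
  moreover have "last (rev mus) = hd mus" using assms(5) by (simp add: last_rev)
  ultimately have "ach U (hd mus + length mus - 1) (monom 1 k)" by simp
  then obtain cs where cs: "good cs" "leib_count U cs \<le> hd mus + length mus - 1"
    "\<And>h t. t \<in> U \<Longrightarrow> fm_coeff U (comb_val cs) h t = fm_coeff U (T (monom 1 k)) h t"
    unfolding ach_def by blast
  have T: "T (monom 1 k) = [(\<lambda>_. 1, \<lambda>x. x ^ k), (\<lambda>t. - ((\<lambda>_. 1) t * deriv (\<lambda>x. x ^ k) t), \<lambda>t. t)]"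
  proof -
    have "deriv (\<lambda>x. x ^ k) t = real k * t ^ (k - 1)" for t :: real
      by (rule DERIV_imp_deriv) (use DERIV_pow[of k t UNIV] in simp)
    then show ?thesis unfolding T_def by (auto simp: poly_monom pderiv_monom fun_eq_iff)
  qed
  obtain t0 where "t0 \<in> U" using assms(3) by blast
  define m where "m = leib_count U cs"
  have "\<exists>g cs. nash_on U g \<and> (\<exists>t\<in>U. g t \<noteq> 0) \<and> comb_valid U cs \<and>
      fm_eq U (comb_val cs) [(g, \<lambda>x. x ^ k), (\<lambda>t. - (g t * deriv (\<lambda>x. x ^ k) t), \<lambda>t. t)] \<and>
      leib_count U cs = m"
  proof (intro exI conjI)
    show "nash_on U (\<lambda>_. 1)" by (rule nash_one)
    show "\<exists>t\<in>U. (\<lambda>_. 1::real) t \<noteq> 0" using \<open>t0 \<in> U\<close> by auto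
    show "comb_valid U cs" by (rule good_valid[OF cs(1)])
    have "fm_eq U (comb_val cs) (T (monom 1 k))" unfolding fm_eq_def using cs(3) by blast
    then show "fm_eq U (comb_val cs) [((\<lambda>_. 1), \<lambda>x. x ^ k), (\<lambda>t. - ((\<lambda>_. 1) t * deriv (\<lambda>x. x ^ k) t), \<lambda>t. t)]"
      by (simp only: T)
    show "leib_count U cs = m" by (simp add: m_def)
  qed
  then have "LC U (\<lambda>x. x ^ k) \<le> m"
    unfolding LC_def by (rule Least_le)
  with cs(2) show ?thesis unfolding m_def by simp
qed

end
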